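(* Let $T$ be a tree and $s\in C$ any scenario of $T$. Then $T$ has a prime broadcast center under $s$.
   Context: $T$ is a finite tree with vertex set $V(T)$, $|V(T)|=n$, and edge set $E(T)$. Each edge $(u,v)$ carries an interval $[w^-_{u,v},w^+_{u,v}]$ of non-negative reals. A scenario $s$ assigns to every edge $(u,v)$ a weight $w^s_{u,v}\in[w^-_{u,v},w^+_{u,v}]$; $C$ is the set of all scenarios. A constant $\rho>0$ (connection time) is fixed. Broadcast time (postal model): for a subtree $G$ of $T$ and $u\in V(G)$, $b^s(u,G)$ is defined recursively by $b^s(u,G)=0$ if $u$ has no neighbour in $G$; otherwise, if $v_1,\dots,v_h$ are the neighbours of $u$ in $G$ and $G_{v}$ denotes the component of $G-u$ containing $v$, then $b^s(u,G)=\min_{\pi}\max_{1\le k\le h}\big(k\rho+w^s_{u,v_{\pi(k)}}+b^s(v_{\pi(k)},G_{v_{\pi(k)}})\big)$, the minimum over all permutations $\pi$ of $\{1,\dots,h\}$. The set of broadcast centers under $s$ is $B^s=\{u\in V(T): b^s(u,T)\le b^s(v,T)\ \forall v\in V(T)\}$. For distinct $x,y\in V(T)$, $T_{x,y}$ denotes the component of $T-x$ containing $y$, and $\bar T_{x,y}$ denotes the subtree of $T$ induced by $V(T)\setminus V(T_{x,y})$ (it contains $x$). A vertex $\hat\kappa\in B^s$ is a prime broadcast center of $T$ under $s$ if $b^s(\hat\kappa,\bar T_{\hat\kappa,u})\ge b^s(u,\bar T_{u,\hat\kappa})$ for every neighbour $u$ of $\hat\kappa$ in $T$. *)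

theory Defs
  imports Main "HOL-Library.Extended_Real"
begin

text \<open>A graph is given by a vertex set V and a symmetric adjacency relation E.
  Subtrees are represented by their vertex sets (induced subgraphs).\<close>

definition restr :: "('a \<Rightarrow> 'a \<Rightarrow> bool) \<Rightarrow> 'a set \<Rightarrow> 'a \<Rightarrow> 'a \<Rightarrow> bool" where
  "restr E S a b \<longleftrightarrow> E a b \<and> a \<in> S \<and> b \<in> S"

definition comp :: "('a \<Rightarrow> 'a \<Rightarrow> bool) \<Rightarrow> 'a set \<Rightarrow> 'a \<Rightarrow> 'a set" where
  "comp E S v = {x. (restr E S)\<^sup>*\<^sup>* v x}"

text \<open>A finite tree: finite nonempty vertex set, symmetric irreflexive edges inside V,
  connected, and every edge is a bridge (minimally connected = acyclic).\<close>
definition is_tree :: "'a set \<Rightarrow> ('a \<Rightarrow> 'a \<Rightarrow> bool) \<Rightarrow> bool" where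
  "is_tree V E \<longleftrightarrow> finite V \<and> V \<noteq> {} \<and>
     (\<forall>u v. E u v \<longrightarrow> u \<in> V \<and> v \<in> V \<and> u \<noteq> v \<and> E v u) \<and>
     (\<forall>x\<in>V. \<forall>y\<in>V. (restr E V)\<^sup>*\<^sup>* x y) \<and>
     (\<forall>u v. E u v \<longrightarrow>
        \<not> (\<lambda>a b. restr E V a b \<and> {a, b} \<noteq> {u, v})\<^sup>*\<^sup>* u v)"

text \<open>Broadcast time with explicit recursion depth (fuel). The recursion on a subtree
  with vertex set G only descends to strictly smaller vertex sets, so fuel card G suffices.
  Position k (0-based) in the sending order xs corresponds to k+1 in the paper.\<close>
primrec bt :: "('a \<Rightarrow> 'a \<Rightarrow> bool) \<Rightarrow> ('a \<Rightarrow> 'a \<Rightarrow> real) \<Rightarrow> real \<Rightarrow> nat \<Rightarrow> 'a set \<Rightarrow> 'a \<Rightarrow> real" where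
  "bt E w \<rho> 0 G u = 0"
| "bt E w \<rho> (Suc n) G u =
     (if {v \<in> G. E u v} = {} then 0
      else Min ((\<lambda>xs. Max ((\<lambda>k. real (Suc k) * \<rho> + w u (xs ! k)
                   + bt E w \<rho> n (comp E (G - {u}) (xs ! k)) (xs ! k)) ` {..<length xs}))
              ` {xs. distinct xs \<and> set xs = {v \<in> G. E u v}}))"

definition broadcast_time :: "('a \<Rightarrow> 'a \<Rightarrow> bool) \<Rightarrow> ('a \<Rightarrow> 'a \<Rightarrow> real) \<Rightarrow> real \<Rightarrow> 'a set \<Rightarrow> 'a \<Rightarrow> real" where
  "broadcast_time E w \<rho> G u = bt E w \<rho> (card G) G u"

definition T_comp :: "'a set \<Rightarrow> ('a \<Rightarrow> 'a \<Rightarrow> bool) \<Rightarrow> 'a \<Rightarrow> 'a \<Rightarrow> 'a set" where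
  "T_comp V E x y = comp E (V - {x}) y"

definition T_bar :: "'a set \<Rightarrow> ('a \<Rightarrow> 'a \<Rightarrow> bool) \<Rightarrow> 'a \<Rightarrow> 'a \<Rightarrow> 'a set" where
  "T_bar V E x y = V - T_comp V E x y"

definition broadcast_centers :: "'a set \<Rightarrow> ('a \<Rightarrow> 'a \<Rightarrow> bool) \<Rightarrow> ('a \<Rightarrow> 'a \<Rightarrow> real) \<Rightarrow> real \<Rightarrow> 'a set" where
  "broadcast_centers V E w \<rho> =
     {u \<in> V. \<forall>v\<in>V. broadcast_time E w \<rho> V u \<le> broadcast_time E w \<rho> V v}"

definition prime_broadcast_center :: "'a set \<Rightarrow> ('a \<Rightarrow> 'a \<Rightarrow> bool) \<Rightarrow> ('a \<Rightarrow> 'a \<Rightarrow> real) \<Rightarrow> real \<Rightarrow> 'a \<Rightarrow> bool" where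
  "prime_broadcast_center V E w \<rho> k \<longleftrightarrow>
     k \<in> broadcast_centers V E w \<rho> \<and>
     (\<forall>u. E k u \<longrightarrow>
        broadcast_time E w \<rho> (T_bar V E k u) k \<ge> broadcast_time E w \<rho> (T_bar V E u k) u)"

definition scenario :: "('a \<Rightarrow> 'a \<Rightarrow> bool) \<Rightarrow> ('a \<Rightarrow> 'a \<Rightarrow> real) \<Rightarrow> ('a \<Rightarrow> 'a \<Rightarrow> real)
                        \<Rightarrow> ('a \<Rightarrow> 'a \<Rightarrow> real) \<Rightarrow> bool" where
  "scenario E wlo whi w \<longleftrightarrow>
     (\<forall>u v. E u v \<longrightarrow> wlo u v \<le> w u v \<and> w u v \<le> whi u v \<and> w u v = w v u)"

end

theory Submission
  imports Defs
begin

declare bt.simps(2)[simp del]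

lemma comp_refl: "x \<in> comp E S x" by (simp add: comp_def)

lemma comp_sub: assumes "x \<in> S" shows "comp E S x \<subseteq> S"
proof
  fix y assume "y \<in> comp E S x"
  hence "(restr E S)\<^sup>*\<^sup>* x y" by (simp add: comp_def)
  thus "y \<in> S" using assms by (induction rule: rtranclp_induct) (auto simp: restr_def)
qed

lemma lists_finite: "finite A \<Longrightarrow> finite {xs. distinct xs \<and> set xs = A}"
  by (rule finite_subset[OF _ finite_subset_distinct]) auto

lemma lists_ne: "finite A \<Longrightarrow> {xs. distinct xs \<and> set xs = A} \<noteq> {}"
  using finite_distinct_list by blast

lemma bt_fuel:
  assumes irr: "\<And>a. \<not> E a a"
  shows "finite G \<Longrightarrow> u \<in> G \<Longrightarrow> card G \<le> n \<Longrightarrow> card G \<le> m \<Longrightarrow> bt E w \<rho> n G u = bt E w \<rho> m G u"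
proof (induction n arbitrary: m G u)
  case 0
  then have "card G > 0" using card_gt_0_iff by blast
  with 0 show ?case by simp
next
  case (Suc n)
  then have "card G > 0" using card_gt_0_iff by blast
  with Suc.prems obtain m' where m: "m = Suc m'" by (cases m) auto
  have eq: "bt E w \<rho> n (comp E (G - {u}) x) x = bt E w \<rho> m' (comp E (G - {u}) x) x"
    if x: "x \<in> {v \<in> G. E u v}" for x
  proof -
    have xu: "x \<in> G - {u}" using irr x by auto
    have sub: "comp E (G - {u}) x \<subseteq> G - {u}" by (rule comp_sub[OF xu])
    have fin: "finite (comp E (G - {u}) x)" using sub Suc.prems(1) finite_subset by blast
    have "card (comp E (G - {u}) x) \<le> card (G - {u})" using card_mono[OF _ sub] Suc.prems(1) by simp
    also have "\<dots> = card G - 1" using Suc.prems(1,2) by simp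
    finally have c: "card (comp E (G - {u}) x) \<le> card G - 1" .
    show ?thesis apply (rule Suc.IH) using fin comp_refl c Suc.prems m by auto
  qed
  show ?case unfolding m bt.simps
    apply (rule if_cong[OF refl refl])
    apply (rule arg_cong[where f=Min])
    apply (rule image_cong[OF refl])
    apply (rule arg_cong[where f=Max])
    apply (rule image_cong[OF refl])
  proof -
    fix xs k assume xs: "xs \<in> {xs. distinct xs \<and> set xs = {v \<in> G. E u v}}" and k: "k \<in> {..<length xs}"
    have "xs ! k \<in> set xs" using k by simp
    hence "xs ! k \<in> {v \<in> G. E u v}" using xs by simp
    then show "real (Suc k) * \<rho> + w u (xs ! k) + bt E w \<rho> n (comp E (G - {u}) (xs ! k)) (xs ! k) =
          real (Suc k) * \<rho> + w u (xs ! k) + bt E w \<rho> m' (comp E (G - {u}) (xs ! k)) (xs ! k)"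
      by (simp only: eq)
  qed
qed

lemma tree_sym: "is_tree V E \<Longrightarrow> E a b \<Longrightarrow> E b a" by (simp add: is_tree_def)
lemma tree_irr: "is_tree V E \<Longrightarrow> \<not> E a a" by (auto simp: is_tree_def)
lemma tree_V: "is_tree V E \<Longrightarrow> E a b \<Longrightarrow> a \<in> V \<and> b \<in> V" by (simp add: is_tree_def)

lemma restr_avoid:
  assumes "restr E (V - {x}) a b" and "x \<in> P"
  shows "restr E V a b \<and> {a, b} \<noteq> P"
proof -
  have h: "E a b" "a \<in> V" "b \<in> V" "a \<noteq> x" "b \<noteq> x" using assms(1) unfolding restr_def by blast+
  have "{a, b} \<noteq> P" using h(4,5) assms(2) by blast
  thus ?thesis using h(1-3) unfolding restr_def by blast
qed

lemma tree_bridge: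
  assumes T: "is_tree V E" and e: "E u v"
  shows "\<not> (\<lambda>a b. restr E V a b \<and> {a, b} \<noteq> {u, v})\<^sup>*\<^sup>* u v"
proof -
  have "\<forall>u v. E u v \<longrightarrow> \<not> (\<lambda>a b. restr E V a b \<and> {a, b} \<noteq> {u, v})\<^sup>*\<^sup>* u v"
    using T unfolding is_tree_def by (elim conjE) assumption
  thus ?thesis using e by simp
qed

lemma tree_conn:
  assumes T: "is_tree V E" and "x \<in> V" "y \<in> V"
  shows "(restr E V)\<^sup>*\<^sup>* x y"
proof -
  have "\<forall>x\<in>V. \<forall>y\<in>V. (restr E V)\<^sup>*\<^sup>* x y"
    using T unfolding is_tree_def by (elim conjE) assumption
  thus ?thesis using assms by simp
qed

lemma rtranclp_sym_rev:
  assumes sym: "\<And>a b. R a b \<Longrightarrow> R b a" and "R\<^sup>*\<^sup>* x y" shows "R\<^sup>*\<^sup>* y x"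
  using assms(2) by (induction rule: rtranclp_induct) (auto intro: converse_rtranclp_into_rtranclp sym)

lemma rtranclp_mono_on: "(\<And>a b. R a b \<Longrightarrow> S a b) \<Longrightarrow> R\<^sup>*\<^sup>* x y \<Longrightarrow> S\<^sup>*\<^sup>* x y"
  by (metis predicate2D predicate2I rtranclp_mono)

lemma tree_disj:
  assumes T: "is_tree V E" and e: "E k u"
  shows "comp E (V - {u}) k \<inter> comp E (V - {k}) u = {}"
proof (rule ccontr)
  assume "\<not> ?thesis"
  then obtain x where x1: "(restr E (V - {u}))\<^sup>*\<^sup>* k x" and x2: "(restr E (V - {k}))\<^sup>*\<^sup>* u x"
    by (auto simp: comp_def)
  define R where "R = (\<lambda>a b. restr E V a b \<and> {a, b} \<noteq> {u, k})"
  have symR: "R a b \<Longrightarrow> R b a" for a b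
  proof -
    assume "R a b"
    hence h: "E a b" "a \<in> V" "b \<in> V" "{a, b} \<noteq> {u, k}" by (auto simp: R_def restr_def)
    have "E b a" using tree_sym[OF T h(1)] .
    moreover have "{b, a} = {a, b}" by blast
    ultimately show "R b a" using h unfolding R_def restr_def by simp
  qed
  have kx: "R\<^sup>*\<^sup>* k x" by (rule rtranclp_mono_on[OF _ x1]) (unfold R_def, rule restr_avoid, assumption, blast)
  have a: "R\<^sup>*\<^sup>* x k" using rtranclp_sym_rev[of R, OF symR kx] by assumption
  have "R\<^sup>*\<^sup>* u x" by (rule rtranclp_mono_on[OF _ x2]) (unfold R_def, rule restr_avoid, assumption, blast)
  from this a have "R\<^sup>*\<^sup>* u k" by (rule rtranclp_trans)
  moreover have "E u k" using tree_sym[OF T e] .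
  ultimately show False using tree_bridge[OF T \<open>E u k\<close>] unfolding R_def by simp
qed

lemma tree_cover:
  assumes T: "is_tree V E" and e: "E k u" and x: "x \<in> V"
  shows "x \<in> comp E (V - {u}) k \<or> x \<in> comp E (V - {k}) u"
proof -
  have kV: "k \<in> V" using tree_V[OF T e] by simp
  have "(restr E V)\<^sup>*\<^sup>* k x" by (rule tree_conn[OF T kV x])
  thus ?thesis
  proof (induction rule: rtranclp_induct)
    case base then show ?case by (simp add: comp_refl)
  next
    case (step y z)
    show ?case
    proof (cases "y \<in> comp E (V - {u}) k")
      case True
      have yin: "y \<in> V - {u}" using comp_sub[of k "V - {u}" E] True kV tree_irr[OF T] e by auto
      show ?thesis
      proof (cases "z = u")
        case True then show ?thesis by (simp add: comp_refl)
      next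
        case False
        have "restr E (V - {u}) y z" using step(2) yin False by (auto simp: restr_def)
        with \<open>y \<in> comp E (V - {u}) k\<close> have "(restr E (V - {u}))\<^sup>*\<^sup>* k z" by (auto simp: comp_def)
        then show ?thesis by (simp add: comp_def)
      qed
    next
      case False
      with step(3) have yc: "y \<in> comp E (V - {k}) u" by simp
      have uV: "u \<in> V - {k}" using tree_V[OF T e] tree_irr[OF T] e by auto
      have yin: "y \<in> V - {k}" using comp_sub[OF uV] yc by auto
      show ?thesis
      proof (cases "z = k")
        case True then show ?thesis by (simp add: comp_refl)
      next
        case False
        have "restr E (V - {k}) y z" using step(2) yin False by (auto simp: restr_def)
        with yc have "(restr E (V - {k}))\<^sup>*\<^sup>* u z" by (auto simp: comp_def)
        then show ?thesis by (simp add: comp_def)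
      qed
    qed
  qed
qed

lemma tree_side:
  assumes T: "is_tree V E" and e: "E k u"
  shows "V - comp E (V - {k}) u = comp E (V - {u}) k"
proof -
  have kV: "k \<in> V - {u}" using tree_V[OF T e] tree_irr[OF T] e by auto
  show ?thesis using tree_disj[OF T e] tree_cover[OF T e] comp_sub[OF kV] by blast
qed

lemma comp_restrict:
  assumes sym: "\<And>a b. E a b \<Longrightarrow> E b a" and y: "y \<notin> comp E S k"
  shows "comp E (S - comp E S k) y = comp E S y"
proof
  show "comp E (S - comp E S k) y \<subseteq> comp E S y"
    unfolding comp_def by (auto intro: rtranclp_mono_on[rotated] simp: restr_def)
next
  show "comp E S y \<subseteq> comp E (S - comp E S k) y"
  proof
    fix x assume "x \<in> comp E S y"
    hence "(restr E S)\<^sup>*\<^sup>* y x" by (simp add: comp_def)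
    hence "(restr E (S - comp E S k))\<^sup>*\<^sup>* y x \<and> x \<notin> comp E S k"
    proof (induction rule: rtranclp_induct)
      case base then show ?case using y by simp
    next
      case (step a b)
      have bn: "b \<notin> comp E S k"
      proof
        assume "b \<in> comp E S k"
        moreover have "restr E S b a" using step(2) sym by (auto simp: restr_def)
        ultimately have "a \<in> comp E S k" by (auto simp: comp_def)
        with step(3) show False by simp
      qed
      have "restr E (S - comp E S k) a b" using step(2,3) bn by (auto simp: restr_def)
      with step(3) bn show ?case by auto
    qed
    thus "x \<in> comp E (S - comp E S k) y" by (simp add: comp_def)
  qed
qed

lemma tree_decr:
  assumes T: "is_tree V E" and e: "E k u" and e2: "E u u'" and ne: "u' \<noteq> k"
  shows "comp E (V - {u}) u' \<subset> comp E (V - {k}) u"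
proof -
  have uk: "u \<noteq> k" using tree_irr[OF T] e by auto
  have uu: "u' \<noteq> u" using tree_irr[OF T] e2 by auto
  have V: "k \<in> V" "u \<in> V" "u' \<in> V" using tree_V[OF T e] tree_V[OF T e2] by auto
  have kn: "k \<notin> comp E (V - {u}) u'"
  proof
    assume "k \<in> comp E (V - {u}) u'"
    hence p: "(restr E (V - {u}))\<^sup>*\<^sup>* u' k" by (simp add: comp_def)
    define R where "R = (\<lambda>a b. restr E V a b \<and> {a, b} \<noteq> {u, k})"
    have "R\<^sup>*\<^sup>* u' k" by (rule rtranclp_mono_on[OF _ p]) (unfold R_def, rule restr_avoid, assumption, blast)
    moreover have "R u u'"
    proof -
      have "{u, u'} \<noteq> {u, k}" using ne uu uk by (simp add: doubleton_eq_iff)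
      thus ?thesis using e2 V unfolding R_def restr_def by blast
    qed
    ultimately have "R\<^sup>*\<^sup>* u k" by (simp add: converse_rtranclp_into_rtranclp)
    moreover have "E u k" using tree_sym[OF T e] .
    ultimately show False using tree_bridge[OF T \<open>E u k\<close>] unfolding R_def by simp
  qed
  have sub: "comp E (V - {u}) u' \<subseteq> comp E (V - {k}) u"
  proof
    fix x assume "x \<in> comp E (V - {u}) u'"
    hence "(restr E (V - {u}))\<^sup>*\<^sup>* u' x" by (simp add: comp_def)
    hence "(restr E (V - {k}))\<^sup>*\<^sup>* u x"
    proof (induction rule: rtranclp_induct)
      case base
      have "restr E (V - {k}) u u'" using e2 V ne uk by (auto simp: restr_def)
      then show ?case by auto
    next
      case (step a b)
      have "(restr E (V - {u}))\<^sup>*\<^sup>* u' b" using step(1,2) by (rule rtranclp.rtrancl_into_rtrancl)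
      hence "b \<noteq> k" using kn by (auto simp: comp_def)
      moreover have "a \<noteq> k" using kn step(1) by (auto simp: comp_def)
      ultimately have "restr E (V - {k}) a b" using step(2) by (auto simp: restr_def)
      with step(3) show ?case by (simp add: rtranclp.rtrancl_into_rtrancl)
    qed
    thus "x \<in> comp E (V - {k}) u" by (simp add: comp_def)
  qed
  have "u \<in> comp E (V - {k}) u" by (rule comp_refl)
  moreover have "u \<notin> comp E (V - {u}) u'" using comp_sub[of u' "V - {u}" E] V uu by auto
  ultimately show ?thesis using sub by blast
qed

lemma bt_lower:
  assumes fin: "finite G" and v: "v \<in> G" "E u v" and rho: "\<rho> \<ge> 0"
  shows "\<rho> + w u v + bt E w \<rho> n (comp E (G - {u}) v) v \<le> bt E w \<rho> (Suc n) G u"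
proof -
  let ?L = "{xs. distinct xs \<and> set xs = {x \<in> G. E u x}}"
  let ?F = "\<lambda>xs. Max ((\<lambda>k. real (Suc k) * \<rho> + w u (xs ! k) + bt E w \<rho> n (comp E (G - {u}) (xs ! k)) (xs ! k)) ` {..<length xs})"
  have ne: "{x \<in> G. E u x} \<noteq> {}" using v by auto
  have fl: "finite ?L" using fin by (simp add: lists_finite)
  have nl: "?L \<noteq> {}" using fin finite_distinct_list[of "{x \<in> G. E u x}"] by auto
  have eq: "bt E w \<rho> (Suc n) G u = Min (?F ` ?L)" by (simp only: bt.simps if_not_P[OF ne])
  have all: "\<rho> + w u v + bt E w \<rho> n (comp E (G - {u}) v) v \<le> ?F xs" if xs: "xs \<in> ?L" for xs
  proof -
    obtain i where i: "i < length xs" "xs ! i = v" using v xs by (metis (mono_tags, lifting) in_set_conv_nth mem_Collect_eq)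
    have "\<rho> \<le> real (Suc i) * \<rho>" using rho by (simp add: mult_le_cancel_right1) 
    hence "\<rho> + w u v + bt E w \<rho> n (comp E (G - {u}) v) v \<le>
       real (Suc i) * \<rho> + w u (xs ! i) + bt E w \<rho> n (comp E (G - {u}) (xs ! i)) (xs ! i)" using i by simp
    also have "\<dots> \<le> ?F xs"
      using i by (intro Max_ge) auto
    finally show ?thesis .
  qed
  show ?thesis unfolding eq using fl nl all by (subst Min_ge_iff) auto
qed

lemma bt_upper:
  assumes fin: "finite G" and d: "distinct xs" and s: "set xs = {x \<in> G. E u x}" and ne: "xs \<noteq> []"
    and c: "\<And>i. i < length xs \<Longrightarrow> real (Suc i) * \<rho> + w u (xs ! i) + bt E w \<rho> n (comp E (G - {u}) (xs ! i)) (xs ! i) \<le> c"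
  shows "bt E w \<rho> (Suc n) G u \<le> c"
proof -
  let ?L = "{xs. distinct xs \<and> set xs = {x \<in> G. E u x}}"
  let ?F = "\<lambda>xs. Max ((\<lambda>k. real (Suc k) * \<rho> + w u (xs ! k) + bt E w \<rho> n (comp E (G - {u}) (xs ! k)) (xs ! k)) ` {..<length xs})"
  have ne2: "{x \<in> G. E u x} \<noteq> {}" using s ne by (metis set_empty)
  have fl: "finite ?L" using fin by (simp add: lists_finite)
  have eq: "bt E w \<rho> (Suc n) G u = Min (?F ` ?L)" by (simp only: bt.simps if_not_P[OF ne2])
  have "Min (?F ` ?L) \<le> ?F xs" using fl d s by (intro Min_le) auto
  also have "?F xs \<le> c" using c ne by (subst Max_le_iff) auto
  finally show ?thesis unfolding eq .
qed

lemma bt_attain: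
  assumes fin: "finite G" and ne: "{x \<in> G. E u x} \<noteq> {}"
  shows "\<exists>xs. distinct xs \<and> set xs = {x \<in> G. E u x} \<and> (\<forall>i < length xs.
     real (Suc i) * \<rho> + w u (xs ! i) + bt E w \<rho> n (comp E (G - {u}) (xs ! i)) (xs ! i) \<le> bt E w \<rho> (Suc n) G u)"
proof -
  let ?L = "{xs. distinct xs \<and> set xs = {x \<in> G. E u x}}"
  let ?F = "\<lambda>xs. Max ((\<lambda>k. real (Suc k) * \<rho> + w u (xs ! k) + bt E w \<rho> n (comp E (G - {u}) (xs ! k)) (xs ! k)) ` {..<length xs})"
  have fl: "finite ?L" using fin by (simp add: lists_finite)
  have nl: "?L \<noteq> {}" using fin finite_distinct_list[of "{x \<in> G. E u x}"] by auto
  have "Min (?F ` ?L) \<in> ?F ` ?L" using fl nl by (intro Min_in) auto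
  then obtain xs where xs: "xs \<in> ?L" "?F xs = Min (?F ` ?L)" by auto
  have eq: "bt E w \<rho> (Suc n) G u = ?F xs" by (simp only: bt.simps if_not_P[OF ne] xs(2))
  have "\<forall>i < length xs. real (Suc i) * \<rho> + w u (xs ! i) + bt E w \<rho> n (comp E (G - {u}) (xs ! i)) (xs ! i) \<le> ?F xs"
    by (intro allI impI Max_ge) auto
  then show ?thesis using xs(1) unfolding eq by blast
qed

lemma step_center:
  assumes T: "is_tree V E" and wnn: "\<And>a b. E a b \<Longrightarrow> 0 \<le> w a b"
    and wsym: "\<And>a b. E a b \<Longrightarrow> w a b = w b a" and rho: "\<rho> > 0" and e: "E k u"
    and arr: "broadcast_time E w \<rho> (T_bar V E k u) k < broadcast_time E w \<rho> (T_bar V E u k) u"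
  shows "broadcast_time E w \<rho> V u \<le> broadcast_time E w \<rho> V k"
proof -
  define A where "A = comp E (V - {u}) k"
  define B where "B = comp E (V - {k}) u"
  have e': "E u k" using tree_sym[OF T e] .
  have irr: "\<And>a. \<not> E a a" using tree_irr[OF T] by blast
  have fin: "finite V" using T unfolding is_tree_def by blast
  have kV: "k \<in> V" and uV: "u \<in> V" using tree_V[OF T e] by blast+
  have uk: "u \<noteq> k" using e irr by auto
  have TA: "T_bar V E k u = A" unfolding T_bar_def T_comp_def A_def using tree_side[OF T e] .
  have TB: "T_bar V E u k = B" unfolding T_bar_def T_comp_def B_def using tree_side[OF T e'] .
  have BV: "V - A = B" unfolding A_def B_def using tree_side[OF T e'] .
  have AB: "A \<inter> B = {}" unfolding A_def B_def using tree_disj[OF T e] .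
  obtain n where n: "card V = Suc n" using fin kV by (cases "card V") auto
  have Asub: "A \<subseteq> V - {u}" unfolding A_def by (rule comp_sub) (use kV uk in auto)
  have Bsub: "B \<subseteq> V - {k}" unfolding B_def by (rule comp_sub) (use uV uk in auto)
  have finA: "finite A" and finB: "finite B" using Asub Bsub fin finite_subset by blast+
  have cA: "card A \<le> n" using card_mono[OF _ Asub] fin n uV by simp
  have cB: "card B \<le> n" using card_mono[OF _ Bsub] fin n kV by simp
  have kA: "k \<in> A" and uB: "u \<in> B" unfolding A_def B_def by (rule comp_refl)+
  have bA: "broadcast_time E w \<rho> (T_bar V E k u) k = bt E w \<rho> n A k"
    unfolding TA broadcast_time_def by (rule bt_fuel[OF irr finA kA _ cA]) simp
  have bB: "broadcast_time E w \<rho> (T_bar V E u k) u = bt E w \<rho> n B u"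
    unfolding TB broadcast_time_def by (rule bt_fuel[OF irr finB uB _ cB]) simp
  have low: "\<rho> + w k u + bt E w \<rho> n B u \<le> broadcast_time E w \<rho> V k"
    unfolding broadcast_time_def n B_def using rho by (intro bt_lower[of V u E k \<rho> w n, OF fin uV e]) simp
  have ys: "\<exists>ys. distinct ys \<and> set ys = {x \<in> B. E u x} \<and> (\<forall>i < length ys.
     real (Suc i) * \<rho> + w u (ys ! i) + bt E w \<rho> n (comp E (V - {u}) (ys ! i)) (ys ! i) \<le> bt E w \<rho> n B u)"
  proof (cases "{x \<in> B. E u x} = {}")
    case True then show ?thesis by (intro exI[of _ "[]"]) simp
  next
    case False
    obtain m where m: "card B = Suc m" using finB uB by (cases "card B") auto
    from bt_attain[of B E u \<rho> w m, OF finB False] obtain ys where ysall: "distinct ys \<and> set ys = {x \<in> B. E u x} \<and>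
      (\<forall>i < length ys. real (Suc i) * \<rho> + w u (ys ! i) + bt E w \<rho> m (comp E (B - {u}) (ys ! i)) (ys ! i) \<le> bt E w \<rho> (Suc m) B u)" ..
    have ys: "distinct ys" "set ys = {x \<in> B. E u x}"
      using ysall by (rule conjunct1, rule conjunct1[OF conjunct2])
    have yb: "\<forall>i < length ys. real (Suc i) * \<rho> + w u (ys ! i) + bt E w \<rho> m (comp E (B - {u}) (ys ! i)) (ys ! i) \<le> bt E w \<rho> (Suc m) B u"
      using ysall by (rule conjunct2[THEN conjunct2])
    have bBm: "bt E w \<rho> (Suc m) B u = bt E w \<rho> n B u"
      by (rule bt_fuel[OF irr finB uB _ cB]) (simp add: m)
    have conv: "bt E w \<rho> m (comp E (B - {u}) y) y = bt E w \<rho> n (comp E (V - {u}) y) y"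
      if y: "y \<in> set ys" for y
    proof -
      have yB: "y \<in> B" and yu: "y \<noteq> u" using y ys irr by auto
      have yA: "y \<notin> A" using yB AB by auto
      have Beq: "B - {u} = (V - {u}) - A" using BV by blast
      have r: "comp E ((V - {u}) - comp E (V - {u}) k) y = comp E (V - {u}) y"
        by (rule comp_restrict, rule tree_sym[OF T], assumption, rule yA[unfolded A_def])
      have ceq: "comp E (B - {u}) y = comp E (V - {u}) y"
        unfolding Beq A_def by (rule r)
      have Csub: "comp E (B - {u}) y \<subseteq> B - {u}" by (rule comp_sub) (use yB yu in auto)
      have finC: "finite (comp E (B - {u}) y)" using Csub finB finite_subset by blast
      have cC: "card (comp E (B - {u}) y) \<le> m" using card_mono[OF _ Csub] finB m uB by simp
      have "bt E w \<rho> m (comp E (B - {u}) y) y = bt E w \<rho> n (comp E (B - {u}) y) y"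
        by (rule bt_fuel[OF irr finC comp_refl]) (use cC m cB in auto)
      thus ?thesis using ceq by simp
    qed
    show ?thesis
    proof (intro exI[of _ ys] conjI allI impI)
      fix i assume i: "i < length ys"
      have yi: "ys ! i \<in> set ys" using i by simp
      have "real (Suc i) * \<rho> + w u (ys ! i) + bt E w \<rho> m (comp E (B - {u}) (ys ! i)) (ys ! i) \<le> bt E w \<rho> (Suc m) B u"
        by (rule yb[rule_format, OF i])
      thus "real (Suc i) * \<rho> + w u (ys ! i) + bt E w \<rho> n (comp E (V - {u}) (ys ! i)) (ys ! i) \<le> bt E w \<rho> n B u"
        unfolding conv[OF yi] bBm .
    qed (use ys in auto)
  qed
  then obtain ys where d: "distinct ys" and sy: "set ys = {x \<in> B. E u x}" and
     yb: "\<And>i. i < length ys \<Longrightarrow> real (Suc i) * \<rho> + w u (ys ! i) + bt E w \<rho> n (comp E (V - {u}) (ys ! i)) (ys ! i) \<le> bt E w \<rho> n B u"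
    by blast
  have kB: "k \<notin> B" using kA AB by auto
  have sx: "set (k # ys) = {x \<in> V. E u x}"
  proof -
    have H: "x \<in> B" if "x \<in> V" "E u x" "x \<noteq> k" for x
      using tree_decr[OF T e that(2,3)] comp_refl[of x E "V - {u}"] unfolding B_def by blast
    have "B \<subseteq> V" using Bsub by blast
    then show ?thesis unfolding list.set(2) sy using H kV e' by blast
  qed
  have dx: "distinct (k # ys)" using d sy kB by auto
  have bAB: "bt E w \<rho> n A k < bt E w \<rho> n B u" using arr bA bB by simp
  have wku: "w u k = w k u" "0 \<le> w k u" using wsym[OF e'] wnn[OF e] by auto
  have "bt E w \<rho> (Suc n) V u \<le> broadcast_time E w \<rho> V k"
  proof (rule bt_upper[of V "k # ys" E u \<rho> w n, OF fin dx sx])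
    fix i assume i: "i < length (k # ys)"
    show "real (Suc i) * \<rho> + w u ((k # ys) ! i) + bt E w \<rho> n (comp E (V - {u}) ((k # ys) ! i)) ((k # ys) ! i)
          \<le> broadcast_time E w \<rho> V k"
    proof (cases i)
      case 0
      have "real (Suc i) * \<rho> + w u ((k # ys) ! i) + bt E w \<rho> n (comp E (V - {u}) ((k # ys) ! i)) ((k # ys) ! i)
         = \<rho> + w k u + bt E w \<rho> n A k" using 0 wku unfolding A_def by simp
      then show ?thesis using low bAB by linarith
    next
      case (Suc j)
      have j: "j < length ys" using i Suc by simp
      have "real (Suc i) * \<rho> = \<rho> + real (Suc j) * \<rho>" using Suc by (simp add: algebra_simps)
      moreover have "(k # ys) ! i = ys ! j" using Suc by simp
      ultimately show ?thesis using yb[OF j] low wku by (simp only:)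
    qed
  qed simp
  thus ?thesis unfolding broadcast_time_def n .
qed

lemma chase:
  assumes T: "is_tree V E" and wnn: "\<And>a b. E a b \<Longrightarrow> 0 \<le> w a b"
    and wsym: "\<And>a b. E a b \<Longrightarrow> w a b = w b a" and rho: "\<rho> > 0"
  shows "card (comp E (V - {k}) u) = N \<Longrightarrow> k \<in> broadcast_centers V E w \<rho> \<Longrightarrow> E k u \<Longrightarrow>
    broadcast_time E w \<rho> (T_bar V E k u) k < broadcast_time E w \<rho> (T_bar V E u k) u \<Longrightarrow>
    \<exists>c. prime_broadcast_center V E w \<rho> c"
proof (induction N arbitrary: k u rule: less_induct)
  case (less N k u)
  have le: "broadcast_time E w \<rho> V u \<le> broadcast_time E w \<rho> V k"
    by (rule step_center[OF T wnn wsym rho less.prems(3,4)])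
  have uV: "u \<in> V" using tree_V[OF T less.prems(3)] by blast
  have uc: "u \<in> broadcast_centers V E w \<rho>"
    using less.prems(2) le uV unfolding broadcast_centers_def by force
  show ?case
  proof (cases "prime_broadcast_center V E w \<rho> u")
    case True thus ?thesis by blast
  next
    case False
    then obtain u' where e2: "E u u'" and
      arr2: "broadcast_time E w \<rho> (T_bar V E u u') u < broadcast_time E w \<rho> (T_bar V E u' u) u'"
      using uc unfolding prime_broadcast_center_def by (auto simp: not_le)
    have ne: "u' \<noteq> k" using arr2 less.prems(4) by auto
    have fin: "finite V" using T unfolding is_tree_def by blast
    have sub: "comp E (V - {k}) u \<subseteq> V"
      using comp_sub[of u "V - {k}" E] uV tree_irr[OF T] less.prems(3) by auto
    have "card (comp E (V - {u}) u') < card (comp E (V - {k}) u)"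
      by (rule psubset_card_mono[OF finite_subset[OF sub fin] tree_decr[OF T less.prems(3) e2 ne]])
    hence lt: "card (comp E (V - {u}) u') < N" using less.prems(1) by simp
    show ?thesis by (rule less.IH[OF lt refl uc e2 arr2])
  qed
qed

theorem lemma3:
  fixes V :: "'a set" and E :: "'a \<Rightarrow> 'a \<Rightarrow> bool"
    and wlo whi w :: "'a \<Rightarrow> 'a \<Rightarrow> real" and \<rho> :: real
  assumes "is_tree V E"
    and "\<forall>u v. E u v \<longrightarrow> 0 \<le> wlo u v \<and> wlo u v \<le> whi u v \<and> wlo u v = wlo v u \<and> whi u v = whi v u"
    and "\<rho> > 0"
    and "scenario E wlo whi w"
  shows "\<exists>k. prime_broadcast_center V E w \<rho> k"
proof -
  note T = assms(1)
  have wnn: "0 \<le> w a b" if "E a b" for a b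
    using assms(2,4) that unfolding scenario_def by (meson order_trans)
  have wsym: "w a b = w b a" if "E a b" for a b
    using assms(4) that unfolding scenario_def by blast
  have fin: "finite V" and ne: "V \<noteq> {}" using T unfolding is_tree_def by blast+
  let ?f = "broadcast_time E w \<rho> V"
  have "Min (?f ` V) \<in> ?f ` V" using fin ne by (intro Min_in) auto
  then obtain k0 where k0: "k0 \<in> V" "?f k0 = Min (?f ` V)" by auto
  have kc: "k0 \<in> broadcast_centers V E w \<rho>"
    unfolding broadcast_centers_def using k0 fin by auto
  show ?thesis
  proof (cases "prime_broadcast_center V E w \<rho> k0")
    case True thus ?thesis by blast
  next
    case False
    then obtain u where e: "E k0 u" and
      arr: "broadcast_time E w \<rho> (T_bar V E k0 u) k0 < broadcast_time E w \<rho> (T_bar V E u k0) u"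
      using kc unfolding prime_broadcast_center_def by (auto simp: not_le)
    show ?thesis by (rule chase[OF T wnn wsym assms(3) refl kc e arr])
  qed
qed

end
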